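(* Let $X_1,X_2,\dots$ be i.i.d. real random variables whose distribution function $F_X$ is continuous and strictly increasing on an interval $I$ with $\mathbb{P}(X_1\in I)=1$ and $F_X(I)=(0,1)$. Suppose $X_1$ has a continuous density $f$ that is positive at its median $m=F_X^{-1}(1/2)$. Let \[ \widehat b_{F_X,n}:=F_X^{-1}\!\left(\frac1n\sum_{i=1}^n F_X(X_i)\right). \] Then \[ \sqrt n\big(\widehat b_{F_X,n}-m\big)\xrightarrow{\ d\ }\mathcal N\!\left(0,\ \frac{1}{12\,f(m)^2}\right). \] *)

theory Defs
  imports "HOL-Probability.Probability"
begin

end

theory Submission
  imports Defs "HOL-Real_Asymp.Real_Asymp"
begin


lemma delta_skorohod:
  fixes M :: "'a measure" and T :: "nat \<Rightarrow> 'a \<Rightarrow> real" and h :: "nat \<Rightarrow> real \<Rightarrow> real"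
  assumes PS: "prob_space M"
    and Tm[measurable]: "\<And>n. T n \<in> borel_measurable M"
    and hm[measurable]: "\<And>n. h n \<in> borel_measurable borel"
    and conv: "weak_conv_m (\<lambda>n. distr M borel (T n)) std_normal_distribution"
    and hlim: "\<And>y ys. ys \<longlonglongrightarrow> y \<Longrightarrow> (\<lambda>n. h n (ys n)) \<longlonglongrightarrow> c * y"
    and cpos: "c > 0"
  shows "weak_conv_m (\<lambda>n. distr M borel (\<lambda>\<omega>. h n (T n \<omega>))) (density lborel (\<lambda>x. ennreal (normal_density 0 c x)))"
proof -
  interpret M: prob_space M by fact
  have rd: "real_distribution (distr M borel (T n))" for n
    by (rule M.real_distribution_distr) simp
  obtain Omega Y_seq Y where
    ps_Omega [simp]: "prob_space Omega" and
    Y_seq_measurable [measurable]: "\<And>n. Y_seq n \<in> borel_measurable Omega" and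
    distr_Y_seq: "\<And>n. distr Omega borel (Y_seq n) = distr M borel (T n)" and
    Y_measurable [measurable]: "Y \<in> measurable Omega lborel" and
    distr_Y: "distr Omega borel Y = std_normal_distribution" and
    YnY: "\<And>x :: real. x \<in> space Omega \<Longrightarrow> (\<lambda>n. Y_seq n x) \<longlonglongrightarrow> Y x"
    using Skorohod[OF rd real_dist_normal_dist conv] by metis
  interpret O: prob_space Omega by fact
  have Yb[measurable]: "Y \<in> borel_measurable Omega" using Y_measurable by simp
  have "distributed Omega lborel Y (\<lambda>x. ennreal (std_normal_density x))"
    unfolding distributed_def
  proof (intro conjI)
    show "distr Omega lborel Y = density lborel (\<lambda>x. ennreal (std_normal_density x))"
      using distr_Y
      by (metis distr_cong sets_lborel)
  qed (auto)
  from O.normal_density_affine[OF this, where \<alpha>=c and \<beta>=0] cpos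
  have D: "distributed Omega lborel (\<lambda>x. c * Y x) (\<lambda>x. ennreal (normal_density 0 c x))" by simp
  have N: "density lborel (\<lambda>x. ennreal (normal_density 0 c x)) = distr Omega borel (\<lambda>x. c * Y x)"
    using distributed_distr_eq_density[OF D] by (metis distr_cong sets_lborel)
  show ?thesis unfolding N
  proof (rule integral_bdd_continuous_conv_imp_weak_conv)
    show "real_distribution (distr M borel (\<lambda>\<omega>. h n (T n \<omega>)))" for n
      by (rule M.real_distribution_distr) simp
    show "real_distribution (distr Omega borel (\<lambda>x. c * Y x))"
      by (rule O.real_distribution_distr) simp
    fix f :: "real \<Rightarrow> real" assume fc: "\<And>x. isCont f x" and fb: "\<And>x. \<bar>f x\<bar> \<le> 1"
    have fm[measurable]: "f \<in> borel_measurable borel"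
      using fc by (intro borel_measurable_continuous_onI continuous_at_imp_continuous_on) auto
    have eq1: "integral\<^sup>L (distr M borel (\<lambda>\<omega>. h n (T n \<omega>))) f = (\<integral>x. f (h n (Y_seq n x)) \<partial>Omega)" for n
    proof -
      have "integral\<^sup>L (distr M borel (\<lambda>\<omega>. h n (T n \<omega>))) f = (\<integral>\<omega>. f (h n (T n \<omega>)) \<partial>M)"
        by (simp add: integral_distr)
      also have "\<dots> = integral\<^sup>L (distr M borel (T n)) (\<lambda>t. f (h n t))"
        by (simp add: integral_distr)
      also have "\<dots> = (\<integral>x. f (h n (Y_seq n x)) \<partial>Omega)"
        unfolding distr_Y_seq[symmetric] by (simp add: integral_distr)
      finally show ?thesis .
    qed
    have eq2: "integral\<^sup>L (distr Omega borel (\<lambda>x. c * Y x)) f = (\<integral>x. f (c * Y x) \<partial>Omega)"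
      by (simp add: integral_distr)
    have ae: "AE x in Omega. (\<lambda>n. f (h n (Y_seq n x))) \<longlonglongrightarrow> f (c * Y x)"
      by (auto intro!: isCont_tendsto_compose[OF fc] hlim YnY)
    show "(\<lambda>n. integral\<^sup>L (distr M borel (\<lambda>\<omega>. h n (T n \<omega>))) f) \<longlonglongrightarrow> integral\<^sup>L (distr Omega borel (\<lambda>x. c * Y x)) f"
      unfolding eq1 eq2
      by (rule integral_dominated_convergence[where w="\<lambda>x. 1"]) (auto simp: fb ae)
  qed
qed



lemma inv_basic:
  fixes F :: "real \<Rightarrow> real" and I :: "real set"
  assumes strict: "strict_mono_on I F" and img: "F ` I = {0<..<1}"
    and y: "0 < y" "y < 1"
  shows "the_inv_into I F y \<in> I" "F (the_inv_into I F y) = y"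
proof -
  have inj: "inj_on F I" using strict by (rule strict_mono_on_imp_inj_on)
  have "y \<in> F ` I" using img y by auto
  then show "the_inv_into I F y \<in> I" "F (the_inv_into I F y) = y"
    using inj by (auto intro: the_inv_into_into f_the_inv_into_f)
qed

lemma strict_le_iff:
  fixes F :: "real \<Rightarrow> real"
  assumes strict: "strict_mono_on I F" and "a \<in> I" "b \<in> I"
  shows "F a < F b \<longleftrightarrow> a < b"
  using assms unfolding strict_mono_on_def
  by (smt (verit))

lemma inv_interior:
  fixes F :: "real \<Rightarrow> real" and I :: "real set"
  assumes I_interval: "is_interval I" and strict: "strict_mono_on I F" and img: "F ` I = {0<..<1}"
    and y: "0 < y" "y < 1"
  shows "\<exists>x1 x2. x1 < the_inv_into I F y \<and> the_inv_into I F y < x2 \<and> {x1..x2} \<subseteq> I"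
proof -
  define g where "g = the_inv_into I F"
  have y1: "0 < y/2" "y/2 < 1" "0 < (1+y)/2" "(1+y)/2 < 1" using y by auto
  have a: "g (y/2) \<in> I" "F (g (y/2)) = y/2" using inv_basic[OF strict img y1(1,2)] by (simp_all add: g_def)
  have b: "g ((1+y)/2) \<in> I" "F (g ((1+y)/2)) = (1+y)/2" using inv_basic[OF strict img y1(3,4)] by (simp_all add: g_def)
  have c: "g y \<in> I" "F (g y) = y" using inv_basic[OF strict img y] by (simp_all add: g_def)
  have "F (g (y/2)) < F (g y)" using a c y by simp
  then have 1: "g (y/2) < g y" using strict_le_iff[OF strict a(1) c(1)] by blast
  have "F (g y) < F (g ((1+y)/2))" using b c y by simp
  then have 2: "g y < g ((1+y)/2)" using strict_le_iff[OF strict c(1) b(1)] by blast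
  have "{g (y/2)..g ((1+y)/2)} \<subseteq> I"
  proof
    fix z assume "z \<in> {g (y/2)..g ((1+y)/2)}"
    then have z: "g (y/2) \<le> z" "z \<le> g ((1+y)/2)" by auto
    have "\<forall>a\<in>I. \<forall>b\<in>I. \<forall>x. a \<le> x \<and> x \<le> b \<longrightarrow> x \<in> I" using I_interval by (simp only: is_interval_1)
    then show "z \<in> I" using a(1) b(1) z by blast
  qed
  with 1 2 show ?thesis unfolding g_def by blast
qed

lemma inv_isCont:
  fixes F :: "real \<Rightarrow> real" and I :: "real set"
  assumes I_interval: "is_interval I" and strict: "strict_mono_on I F" and img: "F ` I = {0<..<1}"
    and cont: "continuous_on I F"
    and y: "0 < y" "y < 1"
  shows "isCont (the_inv_into I F) y"
proof -
  define g where "g = the_inv_into I F"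
  define x where "x = g y"
  have c: "x \<in> I" "F x = y" using inv_basic[OF strict img, of y] y by (auto simp: x_def g_def)
  obtain x1 x2 where x12: "x1 < x" "x < x2" "{x1..x2} \<subseteq> I"
    using inv_interior[OF I_interval strict img y] unfolding x_def g_def by blast
  define d where "d = min (x - x1) (x2 - x) / 2"
  have d: "0 < d" "d < x - x1" "d < x2 - x" using x12 by (auto simp: d_def)
  have inj: "inj_on F I" using strict by (rule strict_mono_on_imp_inj_on)
  have sub: "{x1<..<x2} \<subseteq> I" using x12 by auto
  have zin: "z \<in> {x1<..<x2}" if z: "\<bar>z - x\<bar> \<le> d" for z
  proof -
    have "z - x \<le> d" "x - z \<le> d" using z by linarith+
    then show ?thesis using d by simp
  qed
  have co: "continuous_on {x1<..<x2} F" using cont sub by (rule continuous_on_subset)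
  have "isCont g (F x)"
  proof (rule isCont_inverse_function[where f=F and g=g and x=x, OF d(1)])
    fix z assume z: "\<bar>z - x\<bar> \<le> d"
    then have zI: "z \<in> I" using sub zin by blast
    show "g (F z) = z" unfolding g_def using inj zI by (rule the_inv_into_f_f)
  next
    fix z assume z: "\<bar>z - x\<bar> \<le> d"
    show "isCont F z" using co zin[OF z] continuous_on_eq_continuous_at[OF open_greaterThanLessThan] by blast
  qed
  then show ?thesis using c(2) by (simp add: g_def)
qed

lemma inv_measurable:
  fixes F :: "real \<Rightarrow> real" and I :: "real set"
  assumes I_interval: "is_interval I" and strict: "strict_mono_on I F" and img: "F ` I = {0<..<1}"
    and cont: "continuous_on I F"
  shows "the_inv_into I F \<in> borel_measurable borel"
proof -
  let ?g = "the_inv_into I F"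
  have eq: "?g = (\<lambda>y. if y \<in> {0<..<1} then ?g y else ?g 2)"
  proof
    fix y :: real
    show "?g y = (if y \<in> {0<..<1} then ?g y else ?g 2)"
    proof (cases "y \<in> {0<..<1}")
      case False
      have Fin: "F x \<in> {0<..<1}" if "x \<in> I" for x using img that by blast
      have "\<And>x. (x \<in> I \<and> F x = y) = False" using False Fin by auto
      moreover have "\<And>x. (x \<in> I \<and> F x = 2) = False" using Fin by fastforce
      ultimately have "(\<lambda>x. x \<in> I \<and> F x = y) = (\<lambda>x. x \<in> I \<and> F x = 2)" by auto
      then show ?thesis using False unfolding the_inv_into_def by simp
    qed simp
  qed
  have "(\<lambda>y. if y \<in> {0<..<1} then ?g y else ?g 2) \<in> borel_measurable borel"
  proof (rule borel_measurable_continuous_on_if)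
    show "continuous_on {0<..<1} ?g"
      by (rule continuous_at_imp_continuous_on) (auto intro!: inv_isCont[OF assms])
  qed auto
  then show ?thesis using eq by simp
qed



lemma density_measure_Ioc:
  fixes f :: "real \<Rightarrow> real"
  assumes nonneg: "\<And>x. f x \<ge> 0" and cont: "continuous_on UNIV f"
    and prob: "prob_space (density lborel (\<lambda>x. ennreal (f x)))"
    and au: "a \<le> u"
  shows "measure (density lborel (\<lambda>x. ennreal (f x))) {a<..u} = (LBINT y=a..u. f y)"
proof -
  let ?\<mu> = "density lborel (\<lambda>x. ennreal (f x))"
  interpret P: prob_space ?\<mu> by fact
  have fm[measurable]: "f \<in> borel_measurable borel"
    using cont by (rule borel_measurable_continuous_onI)
  have "measure ?\<mu> {a<..u} = integral\<^sup>L ?\<mu> (indicator {a<..u})"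
    by simp
  also have "\<dots> = (\<integral>x. f x *\<^sub>R indicator {a<..u} x \<partial>lborel)"
    by (rule integral_density) (auto simp: nonneg)
  also have "\<dots> = (LBINT y:{a<..u}. f y)"
    unfolding set_lebesgue_integral_def by (simp add: mult.commute)
  also have "\<dots> = (LBINT y=a..u. f y)"
    using au by (simp add: interval_integral_Ioc)
  finally show ?thesis .
qed

lemma cdf_density_deriv:
  fixes f :: "real \<Rightarrow> real"
  assumes nonneg: "\<And>x. f x \<ge> 0" and cont: "continuous_on UNIV f"
    and prob: "prob_space (density lborel (\<lambda>x. ennreal (f x)))"
  shows "DERIV (cdf (density lborel (\<lambda>x. ennreal (f x)))) x :> f x"
proof -
  let ?\<mu> = "density lborel (\<lambda>x. ennreal (f x))"
  interpret P: prob_space ?\<mu> by fact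
  have fm[measurable]: "f \<in> borel_measurable borel"
    using cont by (rule borel_measurable_continuous_onI)
  interpret R: real_distribution ?\<mu>
    by unfold_locales auto
  define a where "a = x - 1"
  define b where "b = x + 1"
  let ?G = "\<lambda>u. LBINT y=a..u. f y"
  have "(?G has_vector_derivative f x) (at x within {a..b})"
    by (rule interval_integral_FTC2) (auto simp: a_def b_def intro: continuous_on_subset[OF cont])
  then have "(?G has_field_derivative f x) (at x within {a..b})"
    by (simp add: has_real_derivative_iff_has_vector_derivative)
  moreover have "at x within {a..b} = at x"
    by (rule at_within_interior) (auto simp: a_def b_def)
  ultimately have G: "DERIV ?G x :> f x" by simp
  then have G': "DERIV (\<lambda>u. cdf ?\<mu> a + ?G u) x :> f x"
    by (auto intro!: derivative_eq_intros)
  have eqs: "cdf ?\<mu> u = cdf ?\<mu> a + ?G u" if "u \<in> {a<..}" for u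
  proof -
    from that have au: "a < u" by simp
    have "cdf ?\<mu> u - cdf ?\<mu> a = measure ?\<mu> {a<..u}"
      by (rule R.cdf_diff_eq[OF au])
    also have "\<dots> = ?G u"
      using density_measure_Ioc[OF nonneg cont prob] au by simp
    finally show ?thesis by simp
  qed
  have ev: "eventually (\<lambda>u. cdf ?\<mu> u = cdf ?\<mu> a + ?G u) (nhds x)"
    by (rule eventually_mono[OF eventually_nhds_in_open[of "{a<..}" x]]) (auto simp: a_def eqs)
  show ?thesis
    using G' DERIV_cong_ev[OF refl ev refl] by simp
qed



lemma delta_lim:
  fixes g :: "real \<Rightarrow> real"
  assumes der: "DERIV g (1/2) :> D"
    and ys: "ys \<longlonglongrightarrow> y"
  shows "(\<lambda>n. sqrt (real n) * (g (1/2 + ys n * sqrt (real n * (1/12)) / real n) - g (1/2)))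
          \<longlonglongrightarrow> (D / sqrt 12) * y"
proof -
  obtain G where G: "\<And>z. g z - g (1/2) = G z * (z - 1/2)" "continuous (at (1/2)) G" "G (1/2) = D"
    using der unfolding DERIV_caratheodory_within by blast
  have r: "(\<lambda>n::nat. sqrt (real n * (1/12)) / real n) \<longlonglongrightarrow> 0"
    by real_asymp
  have z0: "(\<lambda>n. 1/2 + ys n * (sqrt (real n * (1/12)) / real n)) \<longlonglongrightarrow> 1/2 + y * 0"
    by (intro tendsto_intros ys r)
  then have z: "(\<lambda>n. 1/2 + ys n * (sqrt (real n * (1/12)) / real n)) \<longlonglongrightarrow> 1/2"
    by (simp only: mult_zero_right add_0_right)
  have Gz: "(\<lambda>n. G (1/2 + ys n * (sqrt (real n * (1/12)) / real n))) \<longlonglongrightarrow> D"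
    using isCont_tendsto_compose[OF G(2) z] G(3) by simp
  have lim: "(\<lambda>n. G (1/2 + ys n * (sqrt (real n * (1/12)) / real n)) * ys n / sqrt 12) \<longlonglongrightarrow> D * y / sqrt 12"
    by (intro tendsto_intros Gz ys) simp
  have ev: "eventually (\<lambda>n. G (1/2 + ys n * (sqrt (real n * (1/12)) / real n)) * ys n / sqrt 12 =
     sqrt (real n) * (g (1/2 + ys n * sqrt (real n * (1/12)) / real n) - g (1/2))) sequentially"
  proof (rule eventually_sequentiallyI[of 1])
    fix n :: nat assume n: "1 \<le> n"
    have sq: "sqrt (real n) * sqrt (real n * (1/12)) / real n = 1 / sqrt 12"
      using n by (simp add: real_sqrt_mult real_sqrt_divide field_simps)
    have "sqrt (real n) * (g (1/2 + ys n * sqrt (real n * (1/12)) / real n) - g (1/2))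
        = sqrt (real n) * (G (1/2 + ys n * (sqrt (real n * (1/12)) / real n)) * (ys n * sqrt (real n * (1/12)) / real n))"
      using G(1)[of "1/2 + ys n * sqrt (real n * (1/12)) / real n"] by simp
    also have "\<dots> = G (1/2 + ys n * (sqrt (real n * (1/12)) / real n)) * ys n * (sqrt (real n) * sqrt (real n * (1/12)) / real n)"
      by (simp add: field_simps)
    also have "\<dots> = G (1/2 + ys n * (sqrt (real n * (1/12)) / real n)) * ys n / sqrt 12"
      unfolding sq by simp
    finally show "G (1/2 + ys n * (sqrt (real n * (1/12)) / real n)) * ys n / sqrt 12 =
     sqrt (real n) * (g (1/2 + ys n * sqrt (real n * (1/12)) / real n) - g (1/2))" by simp
  qed
  show ?thesis using Lim_transform_eventually[OF lim ev] by simp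
qed



lemma unif_cdf:
  fixes \<mu> :: "real measure" and I :: "real set"
  assumes R: "real_distribution \<mu>" and mI: "measure \<mu> I = 1" and I_interval: "is_interval I"
    and strict: "strict_mono_on I (cdf \<mu>)" and img: "cdf \<mu> ` I = {0<..<1}"
    and t: "0 \<le> t" "t \<le> 1"
  shows "measure \<mu> {x. cdf \<mu> x \<le> t} = t"
proof -
  interpret R: real_distribution \<mu> by fact
  let ?F = "cdf \<mu>"
  have Ib[measurable]: "I \<in> sets borel" using I_interval by (rule real_interval_borel_measurable)
  have Fm[measurable]: "?F \<in> borel_measurable borel"
    by (rule borel_measurable_mono) (auto simp: mono_def intro: R.cdf_nondecreasing)
  have aeI: "AE x in \<mu>. x \<in> I" using mI by (intro R.AE_prob_1) simp
  have restr: "measure \<mu> B = measure \<mu> (B \<inter> I)" if [measurable]: "B \<in> sets borel" for B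
    by (rule measure_eq_AE) (use aeI in auto)
  have Fin: "?F x \<in> {0<..<1}" if "x \<in> I" for x using img that by blast
  have A[measurable]: "{x. ?F x \<le> t} \<in> sets borel" by measurable
  consider "t = 0" | "0 < t \<and> t < 1" | "t = 1" using t by linarith
  then show ?thesis
  proof cases
    case 1
    have "{x. ?F x \<le> t} \<inter> I = {}" using Fin 1 by force
    then show ?thesis using restr[OF A] 1 by simp
  next
    case 2
    define x0 where "x0 = the_inv_into I ?F t"
    have x0: "x0 \<in> I" "?F x0 = t" using inv_basic[OF strict img] 2 by (auto simp: x0_def)
    have "{x. ?F x \<le> t} \<inter> I = {..x0} \<inter> I"
    proof (intro equalityI subsetI)
      fix x assume "x \<in> {x. ?F x \<le> t} \<inter> I"
      then have "x \<in> I" "?F x \<le> ?F x0" using x0 by auto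
      then show "x \<in> {..x0} \<inter> I" using strict_le_iff[OF strict x0(1)] by force
    next
      fix x assume "x \<in> {..x0} \<inter> I"
      then show "x \<in> {x. ?F x \<le> t} \<inter> I" using R.cdf_nondecreasing x0 by force
    qed
    then have "measure \<mu> {x. ?F x \<le> t} = measure \<mu> ({..x0} \<inter> I)" using restr[OF A] by simp
    also have "\<dots> = measure \<mu> {..x0}" using restr[of "{..x0}"] by simp
    also have "\<dots> = t" using x0 by (simp add: cdf_def)
    finally show ?thesis .
  next
    case 3
    have "{x. ?F x \<le> t} = UNIV" using 3 R.cdf_bounded_prob by auto
    then show ?thesis using 3 R.prob_space by simp
  qed
qed


theorem mainTheorem9:
  fixes M :: "'a measure"
    and X :: "nat \<Rightarrow> 'a \<Rightarrow> real"
    and I :: "real set"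
    and f :: "real \<Rightarrow> real"
  assumes "prob_space M"
    and indep: "prob_space.indep_vars M (\<lambda>i. borel) X UNIV"
    and ident: "\<And>i. distr M borel (X i) = distr M borel (X 0)"
    and I_interval: "is_interval I"
    and I_full: "prob_space.prob M (X 0 -` I \<inter> space M) = 1"
    and F_cont: "continuous_on I (cdf (distr M borel (X 0)))"
    and F_strict: "strict_mono_on I (cdf (distr M borel (X 0)))"
    and F_image: "cdf (distr M borel (X 0)) ` I = {0<..<1}"
    and f_nonneg: "\<And>x. f x \<ge> 0"
    and f_density: "distributed M lborel (X 0) (\<lambda>x. ennreal (f x))"
    and f_cont: "continuous_on UNIV f"
    and f_median_pos: "f (the_inv_into I (cdf (distr M borel (X 0))) (1/2)) > 0"
  shows "weak_conv_m
     (\<lambda>n. distr M borel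
        (\<lambda>\<omega>. sqrt (real n) *
           (the_inv_into I (cdf (distr M borel (X 0)))
              ((\<Sum>i<n. cdf (distr M borel (X 0)) (X i \<omega>)) / real n)
            - the_inv_into I (cdf (distr M borel (X 0))) (1/2))))
     (density lborel (\<lambda>x. ennreal (normal_density 0
        (sqrt (1 / (12 * (f (the_inv_into I (cdf (distr M borel (X 0))) (1/2)))\<^sup>2))) x)))"
  proof -
  interpret P: prob_space M by fact
  have Xm[measurable]: "\<And>i. X i \<in> borel_measurable M"
    using indep unfolding P.indep_vars_def2 by simp
  define \<mu> where "\<mu> = distr M borel (X 0)"
  define F where "F = cdf \<mu>"
  define g where "g = the_inv_into I F"
  define m where "m = g (1/2)"
  have R: "real_distribution \<mu>" unfolding \<mu>_def by (rule P.real_distribution_distr) simp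
  interpret R: real_distribution \<mu> by fact
  have \<mu>d: "\<mu> = density lborel (\<lambda>x. ennreal (f x))"
    using distributed_distr_eq_density[OF f_density] unfolding \<mu>_def by (metis distr_cong sets_lborel)
  have Ib[measurable]: "I \<in> sets borel" using I_interval by (rule real_interval_borel_measurable)
  have mI: "measure \<mu> I = 1"
    using I_full unfolding \<mu>_def by (simp add: measure_distr)
  have Fm[measurable]: "F \<in> borel_measurable borel"
    unfolding F_def by (rule borel_measurable_mono) (auto simp: mono_def intro: R.cdf_nondecreasing)
  have strict: "strict_mono_on I F" using F_strict unfolding F_def \<mu>_def .
  have img: "F ` I = {0<..<1}" using F_image unfolding F_def \<mu>_def .
  have cont: "continuous_on I F" using F_cont unfolding F_def \<mu>_def .
  have gm[measurable]: "g \<in> borel_measurable borel"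
    unfolding g_def by (rule inv_measurable[OF I_interval strict img cont])
  have fpos: "f m > 0" using f_median_pos unfolding m_def g_def F_def \<mu>_def .
  have U_P: "\<P>(\<omega> in M. F (X i \<omega>) \<le> t) = (t - 0) / (1 - 0)" if t: "0 \<le> t" "t \<le> 1" for i t
  proof -
    have "\<P>(\<omega> in M. F (X i \<omega>) \<le> t) = measure (distr M borel (X i)) {x. F x \<le> t}"
      by (subst measure_distr) (auto intro!: arg_cong[where f="measure M"])
    also have "\<dots> = measure \<mu> {x. cdf \<mu> x \<le> t}" using ident[of i] by (simp add: \<mu>_def F_def)
    also have "\<dots> = t" by (rule unif_cdf[OF R mI I_interval strict[unfolded F_def] img[unfolded F_def] t])
    finally show ?thesis by simp
  qed
  have Um: "(\<lambda>\<omega>. F (X i \<omega>)) \<in> borel_measurable M" for i by measurable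
  note U_unif = P.uniform_distrI_borel_atLeastAtMost[OF Um zero_less_one U_P]
  have U_distr: "distr M borel (\<lambda>\<omega>. F (X i \<omega>)) = distr M borel (\<lambda>\<omega>. F (X 0 \<omega>))" for i
  proof -
    have "distr M borel (\<lambda>\<omega>. F (X i \<omega>)) = distr (distr M borel (X i)) borel F"
      by (subst distr_distr) (auto simp: comp_def)
    also have "\<dots> = distr (distr M borel (X 0)) borel F" using ident[of i] by simp
    also have "\<dots> = distr M borel (\<lambda>\<omega>. F (X 0 \<omega>))"
      by (subst distr_distr) (auto simp: comp_def)
    finally show ?thesis .
  qed
  have Fb: "0 \<le> F x \<and> F x \<le> 1" for x unfolding F_def using R.cdf_nonneg R.cdf_bounded_prob by auto
  have CLT: "weak_conv_m (\<lambda>n. distr M borel (\<lambda>x. (\<Sum>i<n. F (X i x) - 1/2) / sqrt (n * (sqrt (1/12))\<^sup>2))) std_normal_distribution"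
  proof (rule P.central_limit_theorem)
    show "P.indep_vars (\<lambda>i. borel) (\<lambda>i \<omega>. F (X i \<omega>)) UNIV"
      by (rule P.indep_vars_compose2[OF indep]) simp
    show "P.expectation (\<lambda>\<omega>. F (X n \<omega>)) = 1/2" for n
      using P.uniform_distributed_expectation[OF U_unif[of n]] by simp
    show "(0::real) < sqrt (1/12)" by simp
    show "integrable M (\<lambda>x. (F (X n x))\<^sup>2)" for n
      by (rule P.integrable_const_bound[where B=1]) (auto simp: Fb abs_square_le_1)
    show "P.variance (\<lambda>\<omega>. F (X n \<omega>)) = (sqrt (1/12))\<^sup>2" for n
      using P.uniform_distributed_variance[OF U_unif[of n]] by simp
    show "distr M borel (\<lambda>\<omega>. F (X n \<omega>)) = distr M borel (\<lambda>\<omega>. F (X 0 \<omega>))" for n by (rule U_distr)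
  qed
  define T where "T n \<omega> = (\<Sum>i<n. F (X i \<omega>) - 1/2) / sqrt (real n * (1/12))" for n \<omega>
  have CLT': "weak_conv_m (\<lambda>n. distr M borel (T n)) std_normal_distribution"
    using CLT unfolding T_def by simp
  have Tm[measurable]: "T n \<in> borel_measurable M" for n unfolding T_def by measurable
  define h where "h n t = sqrt (real n) * (g (1/2 + t * sqrt (real n * (1/12)) / real n) - g (1/2))" for n t
  have hm[measurable]: "h n \<in> borel_measurable borel" for n unfolding h_def by measurable
  have dF: "DERIV F m :> f m"
  proof -
    have "prob_space (density lborel (\<lambda>x. ennreal (f x)))" using R.prob_space_axioms \<mu>d by simp
    from cdf_density_deriv[OF f_nonneg f_cont this] show ?thesis unfolding F_def \<mu>d .
  qed
  have Fg: "F (g y) = y" if "0 < y" "y < 1" for y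
    using inv_basic[OF strict img that] unfolding g_def by simp
  have gc: "isCont g (1/2)" unfolding g_def by (rule inv_isCont[OF I_interval strict img cont]) auto
  have dg: "DERIV g (1/2) :> inverse (f m)"
    by (rule DERIV_inverse_function[where f=F and a=0 and b=1])
       (use dF fpos Fg gc in \<open>auto simp: m_def\<close>)
  have hlim: "(\<lambda>n. h n (ys n)) \<longlonglongrightarrow> (inverse (f m) / sqrt 12) * y" if "ys \<longlonglongrightarrow> y" for ys y
    unfolding h_def using delta_lim[OF dg that] .
  have main: "weak_conv_m (\<lambda>n. distr M borel (\<lambda>\<omega>. h n (T n \<omega>)))
      (density lborel (\<lambda>x. ennreal (normal_density 0 (inverse (f m) / sqrt 12) x)))"
    by (rule delta_skorohod[OF assms(1) Tm hm CLT' hlim]) (use fpos in auto)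
  have eqh: "(\<lambda>\<omega>. h n (T n \<omega>)) = (\<lambda>\<omega>. sqrt (real n) * (g ((\<Sum>i<n. F (X i \<omega>)) / real n) - m))" for n
  proof (cases "n = 0")
    case True then show ?thesis by (simp add: h_def)
  next
    case False
    show ?thesis
    proof
      fix \<omega>
      have s: "sqrt (real n * (1/12)) \<noteq> 0" using False by simp
      have "1/2 + T n \<omega> * sqrt (real n * (1/12)) / real n = 1/2 + (\<Sum>i<n. F (X i \<omega>) - 1/2) / real n"
        unfolding T_def using s by simp
      also have "\<dots> = (\<Sum>i<n. F (X i \<omega>)) / real n"
      proof -
        have "(\<Sum>i<n. F (X i \<omega>) - 1/2) = (\<Sum>i<n. F (X i \<omega>)) - real n / 2"
          by (simp add: sum_subtractf)
        then show ?thesis using False by (simp add: field_simps)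
      qed
      finally show "h n (T n \<omega>) = sqrt (real n) * (g ((\<Sum>i<n. F (X i \<omega>)) / real n) - m)"
        by (simp add: h_def m_def)
    qed
  qed
  have eqc: "inverse (f m) / sqrt 12 = sqrt (1 / (12 * (f m)\<^sup>2))"
    using fpos by (simp add: real_sqrt_divide real_sqrt_mult field_simps)
  have "weak_conv_m (\<lambda>n. distr M borel (\<lambda>\<omega>. sqrt (real n) * (g ((\<Sum>i<n. F (X i \<omega>)) / real n) - m)))
      (density lborel (\<lambda>x. ennreal (normal_density 0 (sqrt (1 / (12 * (f m)\<^sup>2))) x)))"
    using main unfolding eqh eqc .
  then show ?thesis unfolding m_def g_def F_def \<mu>_def .
qed

end
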